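(* Let $X$ be a finite set with at least two elements. If a transition function $t$ has a persistent craving representation, then for every $x\in X$, $\nu_X\ne\nu_{X\setminus\{x\}}$.
   Context: $\mathcal{L}(X)$ is the set of linear orders on $X$, $M(\succ,A)$ the $\succ$-maximal element of $A$. Given a linear order $\rhd$, the craving preferences $\{\succ_x\}_{x\in X}$ are: $x\succ_x y$ for all $y\ne x$, and for $y,z\ne x$, $y\succ_x z$ iff $y\rhd z$. A distribution $\nu$ supported on $\{\succ_x\}$ is craving monotonic w.r.t. $\rhd$ if $x\rhd y$ implies $\nu(\succ_x)>\nu(\succ_y)>0$. A persistence function is $\phi:X^2\to[0,1)$ with $\phi(x,x)=0$, $\phi(x,y)>0$ for $x\ne y$. A transition function $t:X\times\mathcal{L}(X)\to\Delta(\mathcal{L}(X))$ has a persistent craving representation if for some $\rhd$, craving monotonic $\nu$ and persistence function $\phi$: $t(x,\succ_y)=\phi(x,y)\delta_{\succ_y}+(1-\phi(x,y))\nu$ for all $x,y$ and $t(x,\succ)=\nu$ for $\succ$ outside the support of $\nu$. For nonempty $A\subseteq X$, $\nu_A$ is the unique stationary distribution of the Markov chain on $\mathcal{L}(X)$ with $m_A(\succ,\succ')=t_{\succ'}(M(\succ,A),\succ)$. *)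

theory Defs
  imports "HOL-Probability.Probability_Mass_Function"
begin

text \<open>Preferences are strict linear orders on X, represented as relations;
  (a, b) \<in> r means "a is strictly preferred to b".\<close>

definition linorders :: "'a set \<Rightarrow> 'a rel set" where
  "linorders X = {r. strict_linear_order_on X r \<and> r \<subseteq> X \<times> X}"

definition maxel :: "'a rel \<Rightarrow> 'a set \<Rightarrow> 'a" where
  "maxel r A = (THE a. a \<in> A \<and> (\<forall>b\<in>A. b \<noteq> a \<longrightarrow> (a, b) \<in> r))"

definition craving :: "'a set \<Rightarrow> 'a rel \<Rightarrow> 'a \<Rightarrow> 'a rel" where
  "craving X R x = {(a, b). a \<in> X \<and> b \<in> X \<and> a \<noteq> b \<and> (a = x \<or> (b \<noteq> x \<and> (a, b) \<in> R))}"

definition craving_monotonic :: "'a set \<Rightarrow> 'a rel \<Rightarrow> 'a rel pmf \<Rightarrow> bool" where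
  "craving_monotonic X R \<nu> \<longleftrightarrow>
     set_pmf \<nu> \<subseteq> craving X R ` X \<and>
     (\<forall>x\<in>X. \<forall>y\<in>X. (x, y) \<in> R \<longrightarrow>
        pmf \<nu> (craving X R x) > pmf \<nu> (craving X R y) \<and> pmf \<nu> (craving X R y) > 0)"

definition persistence :: "'a set \<Rightarrow> ('a \<Rightarrow> 'a \<Rightarrow> real) \<Rightarrow> bool" where
  "persistence X \<phi> \<longleftrightarrow>
     (\<forall>x\<in>X. \<forall>y\<in>X. 0 \<le> \<phi> x y \<and> \<phi> x y < 1 \<and> \<phi> x x = 0 \<and> (x \<noteq> y \<longrightarrow> \<phi> x y > 0))"

text \<open>Transition function t: the distribution t x r over next preferences,
  given the chosen alternative x and the current preference r.\<close>
definition persistent_craving_rep :: "'a set \<Rightarrow> ('a \<Rightarrow> 'a rel \<Rightarrow> 'a rel pmf) \<Rightarrow> bool" where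
  "persistent_craving_rep X t \<longleftrightarrow>
     (\<exists>R \<nu> \<phi>. R \<in> linorders X \<and> craving_monotonic X R \<nu> \<and> persistence X \<phi> \<and>
       (\<forall>x\<in>X. \<forall>y\<in>X. \<forall>r'. pmf (t x (craving X R y)) r' =
           \<phi> x y * (if r' = craving X R y then 1 else 0) + (1 - \<phi> x y) * pmf \<nu> r') \<and>
       (\<forall>x\<in>X. \<forall>r\<in>linorders X. r \<notin> set_pmf \<nu> \<longrightarrow> t x r = \<nu>))"

definition stationary :: "'a set \<Rightarrow> ('a \<Rightarrow> 'a rel \<Rightarrow> 'a rel pmf) \<Rightarrow> 'a set \<Rightarrow> 'a rel pmf \<Rightarrow> bool" where
  "stationary X t A \<pi> \<longleftrightarrow>
     set_pmf \<pi> \<subseteq> linorders X \<and>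
     (\<forall>r'\<in>linorders X. pmf \<pi> r' = (\<Sum>r\<in>linorders X. pmf \<pi> r * pmf (t (maxel r A) r) r'))"

definition nu :: "'a set \<Rightarrow> ('a \<Rightarrow> 'a rel \<Rightarrow> 'a rel pmf) \<Rightarrow> 'a set \<Rightarrow> 'a rel pmf" where
  "nu X t A = (THE \<pi>. stationary X t A \<pi>)"

end

theory Submission
  imports Defs
begin

lemma mix_pmf_lemma:
  assumes "0 \<le> w" "w \<le> 1"
  shows "pmf (bernoulli_pmf w \<bind> (\<lambda>b. if b then return_pmf s else \<nu>)) r
       = w * (if r = s then 1 else 0) + (1 - w) * pmf \<nu> r"
  using assms by (simp add: pmf_bind)

lemma craving_lin:
  assumes "R \<in> linorders X" "y \<in> X"
  shows "craving X R y \<in> linorders X"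
  using assms unfolding linorders_def strict_linear_order_on_def craving_def
    trans_def irrefl_def total_on_def
  by (auto; blast)

lemma craving_inj:
  assumes "y \<in> X" "z \<in> X" "y \<noteq> z"
  shows "craving X R y \<noteq> craving X R z"
proof
  assume "craving X R y = craving X R z"
  moreover have "(y, z) \<in> craving X R y" using assms by (auto simp: craving_def)
  moreover have "(y, z) \<notin> craving X R z" using assms by (auto simp: craving_def)
  ultimately show False by simp
qed

lemma max_exists:
  assumes "finite A" "A \<noteq> {}" "A \<subseteq> X" "strict_linear_order_on X r"
  shows "\<exists>a\<in>A. \<forall>b\<in>A. b \<noteq> a \<longrightarrow> (a, b) \<in> r"
  using assms
proof (induction A rule: finite_ne_induct)
  case (singleton x)
  then show ?case by auto
next
  case (insert x F)
  then obtain a where a: "a \<in> F" "\<forall>b\<in>F. b \<noteq> a \<longrightarrow> (a, b) \<in> r" by auto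
  have tr: "trans r" and ir: "irrefl r" and to: "total_on X r"
    using insert.prems unfolding strict_linear_order_on_def by auto
  have xX: "x \<in> X" "a \<in> X" using insert.prems a by auto
  show ?case
  proof (cases "(x, a) \<in> r")
    case True
    have "\<forall>b\<in>insert x F. b \<noteq> x \<longrightarrow> (x, b) \<in> r"
      using True a tr insert.hyps by (metis insertE trans_def)
    then show ?thesis by blast
  next
    case False
    have "x \<noteq> a" using insert.hyps a by auto
    then have "(a, x) \<in> r" using False to xX unfolding total_on_def by blast
    then show ?thesis using a by blast
  qed
qed

lemma maxel_eq:
  assumes "r \<in> linorders X" "a \<in> A" "\<forall>b\<in>A. b \<noteq> a \<longrightarrow> (a, b) \<in> r"
  shows "maxel r A = a"
  unfolding maxel_def
proof (rule the_equality)
  show "a \<in> A \<and> (\<forall>b\<in>A. b \<noteq> a \<longrightarrow> (a, b) \<in> r)" using assms by auto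
next
  fix a' assume h: "a' \<in> A \<and> (\<forall>b\<in>A. b \<noteq> a' \<longrightarrow> (a', b) \<in> r)"
  have tr: "trans r" and ir: "irrefl r"
    using assms(1) unfolding linorders_def strict_linear_order_on_def by auto
  show "a' = a"
  proof (rule ccontr)
    assume "a' \<noteq> a"
    then have "(a, a') \<in> r" "(a', a) \<in> r" using h assms by auto
    then have "(a, a) \<in> r" using tr unfolding trans_def by blast
    then show False using ir unfolding irrefl_def irrefl_on_def by blast
  qed
qed

lemma maxel_in:
  assumes "r \<in> linorders X" "finite A" "A \<noteq> {}" "A \<subseteq> X"
  shows "maxel r A \<in> A"
proof -
  obtain a where "a \<in> A" "\<forall>b\<in>A. b \<noteq> a \<longrightarrow> (a, b) \<in> r"
    using max_exists[OF assms(2,3,4), of r] assms(1) unfolding linorders_def by blast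
  then show ?thesis using maxel_eq[OF assms(1)] by simp
qed

lemma finite_linorders: "finite X \<Longrightarrow> finite (linorders X)"
proof -
  assume "finite X"
  then have "finite (Pow (X \<times> X))" by simp
  moreover have "linorders X \<subseteq> Pow (X \<times> X)" unfolding linorders_def by auto
  ultimately show ?thesis by (rule finite_subset[rotated])
qed


lemma sum_row:
  assumes "finite L" "set_pmf \<pi> \<subseteq> L" "s \<in> L"
  shows "(\<Sum>r\<in>L. pmf \<pi> r * (a + (if r = s then g else 0))) = a + pmf \<pi> s * (g::real)"
proof -
  have "(\<Sum>r\<in>L. pmf \<pi> r * (a + (if r = s then g else 0)))
      = (\<Sum>r\<in>L. pmf \<pi> r * a) + (\<Sum>r\<in>L. (if r = s then pmf \<pi> r * g else 0))"
    by (subst sum.distrib[symmetric]) (rule sum.cong, auto simp: distrib_left)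
  also have "(\<Sum>r\<in>L. pmf \<pi> r * a) = a"
    using sum_pmf_eq_1[OF assms(1,2)] by (simp add: sum_distrib_right[symmetric])
  also have "(\<Sum>r\<in>L. (if r = s then pmf \<pi> r * g else 0)) = pmf \<pi> s * g"
    using assms by (simp add: sum.delta)
  finally show ?thesis .
qed

theorem proposition3:
  fixes X :: "'a set" and t :: "'a \<Rightarrow> 'a rel \<Rightarrow> 'a rel pmf"
  assumes "finite X" and "card X \<ge> 2"
    and "persistent_craving_rep X t"
    and "x \<in> X"
  shows "nu X t X \<noteq> nu X t (X - {x})"
proof -
  obtain R \<nu> \<phi> where R: "R \<in> linorders X" and mon: "craving_monotonic X R \<nu>"
    and per: "persistence X \<phi>"
    and tc: "\<forall>x\<in>X. \<forall>y\<in>X. \<forall>r'. pmf (t x (craving X R y)) r' =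
           \<phi> x y * (if r' = craving X R y then 1 else 0) + (1 - \<phi> x y) * pmf \<nu> r'"
    and to: "\<forall>x\<in>X. \<forall>r\<in>linorders X. r \<notin> set_pmf \<nu> \<longrightarrow> t x r = \<nu>"
    using assms(3) unfolding persistent_craving_rep_def by blast
  define L where "L = linorders X"
  define c where "c = craving X R"
  define A where "A = X - {x}"
  define s where "s = c x"
  have finL: "finite L" using finite_linorders[OF assms(1)] L_def by simp
  have cL: "\<And>y. y \<in> X \<Longrightarrow> c y \<in> L" using craving_lin[OF R] c_def L_def by simp
  have sL: "s \<in> L" using cL assms(4) s_def by simp
  have supp: "set_pmf \<nu> \<subseteq> c ` X" using mon unfolding craving_monotonic_def c_def by simp
  have suppL: "set_pmf \<nu> \<subseteq> L" using supp cL by auto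
  have Rtot: "total_on X R" using R unfolding linorders_def strict_linear_order_on_def by simp
  obtain y0 where y0: "y0 \<in> X" "y0 \<noteq> x"
  proof -
    have "X - {x} \<noteq> {}"
    proof
      assume "X - {x} = {}"
      then have "X \<subseteq> {x}" by auto
      then have "card X \<le> 1" using card_mono[OF finite.intros(2)[OF finite.intros(1)]] by fastforce
      then show False using assms(2) by simp
    qed
    then show ?thesis using that by blast
  qed
  have pos: "\<And>y. y \<in> X \<Longrightarrow> pmf \<nu> (c y) > 0"
  proof -
    fix y assume y: "y \<in> X"
    obtain z where z: "z \<in> X" "z \<noteq> y" using y0 assms(4) by metis
    then have "(y, z) \<in> R \<or> (z, y) \<in> R" using Rtot y unfolding total_on_def by blast
    then show "pmf \<nu> (c y) > 0" using mon y z unfolding craving_monotonic_def c_def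
      by (meson order.strict_trans)
  qed
  have nus_pos: "pmf \<nu> s > 0" using pos assms(4) s_def by simp
  have nus_lt1: "pmf \<nu> s < 1"
  proof -
    have ne: "c y0 \<noteq> s" using craving_inj[OF y0(1) assms(4) y0(2)] c_def s_def by simp
    have "sum (pmf \<nu>) {s, c y0} = measure_pmf.prob \<nu> {s, c y0}"
      by (simp add: measure_measure_pmf_finite)
    also have "\<dots> \<le> 1" by simp
    finally have "pmf \<nu> s + pmf \<nu> (c y0) \<le> 1" using ne by simp
    then show ?thesis using pos[OF y0(1)] by simp
  qed
  have Xne: "X \<noteq> {}" using assms(4) by auto
  have Ane: "A \<noteq> {}" "A \<subseteq> X" "finite A" using y0 assms(1) A_def by auto
  have maxc: "\<And>y B. y \<in> B \<Longrightarrow> B \<subseteq> X \<Longrightarrow> maxel (c y) B = y"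
  proof -
    fix y B
    assume yB: "y \<in> B" and BX: "B \<subseteq> X"
    have cy: "c y \<in> linorders X" using cL yB BX L_def by auto
    have "\<forall>b\<in>B. b \<noteq> y \<longrightarrow> (y, b) \<in> c y" using yB BX unfolding c_def craving_def by auto
    then show "maxel (c y) B = y" by (rule maxel_eq[OF cy yB])
  qed
  have incase: "\<And>r. r \<in> set_pmf \<nu> \<Longrightarrow> \<exists>y\<in>X. r = c y" using supp by auto
  have phi0: "\<And>y. y \<in> X \<Longrightarrow> \<phi> y y = 0" using per unfolding persistence_def by blast
  have rowX: "\<And>r r'. r \<in> L \<Longrightarrow> pmf (t (maxel r X) r) r' = pmf \<nu> r'"
  proof -
    fix r r' assume rL: "r \<in> L"
    show "pmf (t (maxel r X) r) r' = pmf \<nu> r'"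
    proof (cases "r \<in> set_pmf \<nu>")
      case True
      then obtain y where y: "y \<in> X" "r = c y" using incase by blast
      then show ?thesis using maxc[of y X] tc phi0[OF y(1)] unfolding c_def by simp
    next
      case False
      have "maxel r X \<in> X" using maxel_in[of r X X] rL L_def assms(1) Xne by simp
      then show ?thesis using to False rL L_def by simp
    qed
  qed
  define a where "a = maxel s A"
  have aA: "a \<in> A" using maxel_in[of s X A] sL L_def Ane a_def by simp
  define f where "f = \<phi> a x"
  have f: "0 < f" "f < 1" using per aA assms(4) unfolding persistence_def f_def A_def by auto
  have rowA: "\<And>r r'. r \<in> L \<Longrightarrow> pmf (t (maxel r A) r) r' = pmf \<nu> r' +
      (if r = s then f * ((if r' = s then 1 else 0) - pmf \<nu> r') else 0)"
  proof -
    fix r r' assume rL: "r \<in> L"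
    show "pmf (t (maxel r A) r) r' = pmf \<nu> r' +
      (if r = s then f * ((if r' = s then 1 else 0) - pmf \<nu> r') else 0)"
    proof (cases "r = s")
      case True
      then show ?thesis using tc aA assms(4) unfolding a_def f_def s_def c_def A_def
        by (simp add: algebra_simps)
    next
      case ns: False
      show ?thesis
      proof (cases "r \<in> set_pmf \<nu>")
        case True
        then obtain y where y: "y \<in> X" "r = c y" using incase by blast
        then have "y \<in> A" using ns s_def A_def by auto
        then show ?thesis using maxc[of y A] Ane tc phi0[OF y(1)] y ns unfolding c_def by simp
      next
        case False
        have "maxel r A \<in> X" using maxel_in[of r X A] rL L_def Ane by auto
        then show ?thesis using to False rL L_def ns by simp
      qed
    qed
  qed
  have statX: "\<And>\<pi>. stationary X t X \<pi> \<longleftrightarrow> \<pi> = \<nu>"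
  proof
    fix \<pi> assume st: "stationary X t X \<pi>"
    then have sp: "set_pmf \<pi> \<subseteq> L" unfolding stationary_def L_def by simp
    show "\<pi> = \<nu>"
    proof (rule pmf_eqI)
      fix r' show "pmf \<pi> r' = pmf \<nu> r'"
      proof (cases "r' \<in> L")
        case True
        then have "pmf \<pi> r' = (\<Sum>r\<in>L. pmf \<pi> r * pmf \<nu> r')"
          using st rowX unfolding stationary_def L_def by simp
        also have "\<dots> = pmf \<nu> r'"
          using sum_pmf_eq_1[OF finL sp] by (simp add: sum_distrib_right[symmetric])
        finally show ?thesis .
      next
        case False
        then show ?thesis using sp suppL by (metis set_pmf_iff subsetD)
      qed
    qed
  next
    fix \<pi> assume "\<pi> = \<nu>"
    then show "stationary X t X \<pi>"
      using suppL rowX sum_pmf_eq_1[OF finL suppL] unfolding stationary_def L_def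
      by (simp add: sum_distrib_right[symmetric])
  qed
  have nuX: "nu X t X = \<nu>" unfolding nu_def by (rule the_equality) (simp_all add: statX)
  have statA: "\<And>\<pi>. stationary X t A \<pi> \<longleftrightarrow> set_pmf \<pi> \<subseteq> L \<and>
      (\<forall>r'\<in>L. pmf \<pi> r' = pmf \<nu> r' + pmf \<pi> s * (f * ((if r' = s then 1 else 0) - pmf \<nu> r')))"
  proof -
    fix \<pi>
    have "set_pmf \<pi> \<subseteq> L \<Longrightarrow> r' \<in> L \<Longrightarrow> (\<Sum>r\<in>L. pmf \<pi> r * pmf (t (maxel r A) r) r') =
       pmf \<nu> r' + pmf \<pi> s * (f * ((if r' = s then 1 else 0) - pmf \<nu> r'))" for r'
      using rowA sum_row[OF finL _ sL] by simp
    note H = this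
    have E: "stationary X t A \<pi> \<longleftrightarrow> set_pmf \<pi> \<subseteq> L \<and>
      (\<forall>r'\<in>L. pmf \<pi> r' = (\<Sum>r\<in>L. pmf \<pi> r * pmf (t (maxel r A) r) r'))"
      unfolding stationary_def L_def by (rule refl)
    show "?thesis \<pi>"
    proof (cases "set_pmf \<pi> \<subseteq> L")
      case True
      have "(\<forall>r'\<in>L. pmf \<pi> r' = (\<Sum>r\<in>L. pmf \<pi> r * pmf (t (maxel r A) r) r')) =
        (\<forall>r'\<in>L. pmf \<pi> r' = pmf \<nu> r' + pmf \<pi> s * (f * ((if r' = s then 1 else 0) - pmf \<nu> r')))"
        by (rule ball_cong) (simp_all only: H[OF True])
      then show ?thesis using E True by (simp only: simp_thms)
    next
      case False
      then show ?thesis using E by (simp only: simp_thms)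
    qed
  qed
  define D where "D = 1 - f * (1 - pmf \<nu> s)"
  have Dpos: "D > 0" unfolding D_def using f nus_pos nus_lt1
    by (smt (verit) mult_le_cancel_left1 mult_pos_pos)
  have statA_sp: "\<And>\<pi>. stationary X t A \<pi> \<Longrightarrow> set_pmf \<pi> \<subseteq> L"
    unfolding stationary_def L_def by simp
  have statA_eq: "\<And>\<pi> r'. stationary X t A \<pi> \<Longrightarrow> r' \<in> L \<Longrightarrow>
      pmf \<pi> r' = pmf \<nu> r' + pmf \<pi> s * (f * ((if r' = s then 1 else 0) - pmf \<nu> r'))"
  proof -
    fix \<pi> r' assume st: "stationary X t A \<pi>" and r'L: "r' \<in> L"
    have "\<forall>r'\<in>L. pmf \<pi> r' = pmf \<nu> r' + pmf \<pi> s * (f * ((if r' = s then 1 else 0) - pmf \<nu> r'))"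
      using statA[of \<pi>] st by blast
    then show "pmf \<pi> r' = pmf \<nu> r' + pmf \<pi> s * (f * ((if r' = s then 1 else 0) - pmf \<nu> r'))"
      using r'L by blast
  qed
  have qform: "\<And>\<pi>. stationary X t A \<pi> \<Longrightarrow> pmf \<pi> s = pmf \<nu> s / D"
  proof -
    fix \<pi> assume st: "stationary X t A \<pi>"
    have "pmf \<pi> s = pmf \<nu> s + pmf \<pi> s * (f * ((if s = s then 1 else 0) - pmf \<nu> s))"
      by (rule statA_eq[OF st sL])
    then have "pmf \<pi> s = pmf \<nu> s + pmf \<pi> s * (f * (1 - pmf \<nu> s))" by simp
    then have "pmf \<pi> s * D = pmf \<nu> s" unfolding D_def by (simp add: algebra_simps)
    then show "pmf \<pi> s = pmf \<nu> s / D" using Dpos by (simp add: field_simps)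
  qed
  define q where "q = pmf \<nu> s / D"
  have eqD: "D - pmf \<nu> s = (1 - f) * (1 - pmf \<nu> s)" unfolding D_def by (simp add: algebra_simps)
  have "(1 - f) * (1 - pmf \<nu> s) \<ge> 0" using f nus_lt1 by simp
  then have nuD: "pmf \<nu> s \<le> D" using eqD by linarith
  have q: "0 \<le> q" "q \<le> 1" using Dpos nus_pos nuD by (simp_all add: q_def pos_divide_le_eq)
  have qD: "q * D = pmf \<nu> s" unfolding q_def using Dpos by simp
  define \<pi>0 where "\<pi>0 = bernoulli_pmf (q * f) \<bind> (\<lambda>b. if b then return_pmf s else \<nu>)"
  have wq: "0 \<le> q * f" "q * f \<le> 1" using q f by (auto simp: mult_le_one)
  have pi0: "\<And>r. pmf \<pi>0 r = q * f * (if r = s then 1 else 0) + (1 - q * f) * pmf \<nu> r"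
    unfolding \<pi>0_def by (rule mix_pmf_lemma[OF wq])
  have pi0s: "pmf \<pi>0 s = q"
    using pi0[of s] qD unfolding D_def by (simp add: algebra_simps)
  have ex: "stationary X t A \<pi>0"
  proof -
    have "set_pmf \<pi>0 \<subseteq> L"
    proof
      fix r assume "r \<in> set_pmf \<pi>0"
      then have "pmf \<pi>0 r \<noteq> 0" by (simp add: set_pmf_iff)
      then have "r = s \<or> pmf \<nu> r \<noteq> 0" using pi0[of r] by (cases "r = s") simp_all
      then show "r \<in> L" using sL suppL by (auto simp: set_pmf_iff)
    qed
    moreover have "\<forall>r'\<in>L. pmf \<pi>0 r' = pmf \<nu> r' + pmf \<pi>0 s * (f * ((if r' = s then 1 else 0) - pmf \<nu> r'))"
      using pi0 pi0s by (simp add: algebra_simps)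
    ultimately show ?thesis using statA[of \<pi>0] by blast
  qed
  have uniq: "\<And>\<pi>. stationary X t A \<pi> \<Longrightarrow> \<pi> = \<pi>0"
  proof -
    fix \<pi> assume st: "stationary X t A \<pi>"
    have qq: "pmf \<pi> s = pmf \<pi>0 s" using qform[OF st] qform[OF ex] by simp
    have sp: "set_pmf \<pi> \<subseteq> L" "set_pmf \<pi>0 \<subseteq> L" using statA_sp[OF st] statA_sp[OF ex] by auto
    show "\<pi> = \<pi>0"
    proof (rule pmf_eqI)
      fix r' show "pmf \<pi> r' = pmf \<pi>0 r'"
      proof (cases "r' \<in> L")
        case True
        then show ?thesis using statA_eq[OF st True] statA_eq[OF ex True] qq by simp
      next
        case False
        then show ?thesis using sp by (metis set_pmf_iff subsetD)
      qed
    qed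
  qed
  have "stationary X t A (nu X t A)"
    unfolding nu_def using ex uniq by (rule theI)
  show ?thesis
  proof
    assume "nu X t X = nu X t (X - {x})"
    then have "stationary X t A \<nu>" using nuX \<open>stationary X t A (nu X t A)\<close> A_def by simp
    then have "pmf \<nu> s = pmf \<nu> s / D" using qform by blast
    then have "pmf \<nu> s * D = pmf \<nu> s" using Dpos by (simp add: field_simps)
    then have "pmf \<nu> s * (f * (1 - pmf \<nu> s)) = 0" unfolding D_def by (simp add: algebra_simps)
    then show False using nus_pos nus_lt1 f by simp
  qed
qed

end
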